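(* Let $n\ge1$, $b\in\mathbb{Z}$, $P_b:\{0,1,\dots,2^n\}\to\mathbb{Z}$, $d(x)=P_b(x)-bx$, let $\epsilon_0$ be the fraction of $x\in D_n$ with $d(x)\ne0$, let $\beta>0$ and $0<\alpha<1$. Assume that the fraction of $x\in D_n$ with $d(x)>0$ and the fraction with $d(x)<0$ are each greater than $\epsilon_0/2-\beta$. If $x\in D_n$ is good, then RandSplit$(x,b,P_b)$ outputs FAIL with probability at least $\epsilon_0/2-\beta-\frac1\alpha(\epsilon_0/2)^2$.
   Context: $D_n=\{0,1,\dots,2^n-1\}$; Rand$(0,2^n)$ is a uniformly random element of $D_n$. For $x,x_1\in D_n$, $\delta_x(x_1)=1$ if $d(x_1)>0$ and $d((x-x_1)\bmod 2^n)<0$, and $\delta_x(x_1)=0$ otherwise; the number of opposite-sign matches of $x$ is $\sum_{x_1\in D_n}\delta_x(x_1)$, and $x$ is good if this number is at most $\frac1\alpha(\epsilon_0/2)^2 2^n$. RandSplit$(x,b,P)$: choose $x_1\leftarrow$ Rand$(0,2^n)$; set $\delta=0$ if $x_1<x$ and $\delta=1$ otherwise; set $x_2=\delta\cdot 2^n+x-x_1$; if $P(x_1)+P(x_2)\ne b\cdot\delta\cdot 2^n+P(x)$ return FAIL, else return PASS. *)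

theory Defs
  imports "HOL-Probability.Probability"
begin

definition Dn :: "nat \<Rightarrow> int set" where
  "Dn n = {0..<2^n}"

text \<open>d(x) = P_b(x) - b x; P is only ever evaluated on {0..2^n}.\<close>
definition dev :: "(int \<Rightarrow> int) \<Rightarrow> int \<Rightarrow> int \<Rightarrow> int" where
  "dev P b x = P x - b * x"

definition frac :: "nat \<Rightarrow> (int \<Rightarrow> bool) \<Rightarrow> real" where
  "frac n Q = real (card {x \<in> Dn n. Q x}) / 2 ^ n"

definition eps0 :: "nat \<Rightarrow> (int \<Rightarrow> int) \<Rightarrow> int \<Rightarrow> real" where
  "eps0 n P b = frac n (\<lambda>x. dev P b x \<noteq> 0)"

definition delta_x :: "nat \<Rightarrow> (int \<Rightarrow> int) \<Rightarrow> int \<Rightarrow> int \<Rightarrow> int \<Rightarrow> nat" where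
  "delta_x n P b x x1 =
     (if dev P b x1 > 0 \<and> dev P b ((x - x1) mod 2^n) < 0 then 1 else 0)"

definition opp_matches :: "nat \<Rightarrow> (int \<Rightarrow> int) \<Rightarrow> int \<Rightarrow> int \<Rightarrow> nat" where
  "opp_matches n P b x = (\<Sum>x1\<in>Dn n. delta_x n P b x x1)"

definition good :: "nat \<Rightarrow> (int \<Rightarrow> int) \<Rightarrow> int \<Rightarrow> real \<Rightarrow> int \<Rightarrow> bool" where
  "good n P b \<alpha> x \<longleftrightarrow>
     real (opp_matches n P b x) \<le> (1 / \<alpha>) * (eps0 n P b / 2)^2 * 2^n"

definition randsplit_fails :: "nat \<Rightarrow> int \<Rightarrow> (int \<Rightarrow> int) \<Rightarrow> int \<Rightarrow> int \<Rightarrow> bool" where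
  "randsplit_fails n b P x x1 =
     (let \<delta> = (if x1 < x then 0 else 1 :: int);
          x2 = \<delta> * 2^n + x - x1
      in P x1 + P x2 \<noteq> b * \<delta> * 2^n + P x)"

definition fail_prob :: "nat \<Rightarrow> int \<Rightarrow> (int \<Rightarrow> int) \<Rightarrow> int \<Rightarrow> real" where
  "fail_prob n b P x =
     measure_pmf.prob (pmf_of_set (Dn n)) {x1. randsplit_fails n b P x x1}"

end

theory Submission
  imports Defs
begin

lemma fails_iff:
  assumes "x \<in> Dn n" "x1 \<in> Dn n" "x1 \<noteq> x"
  shows "randsplit_fails n b P x x1 \<longleftrightarrow>
         dev P b x1 + dev P b ((x - x1) mod 2^n) \<noteq> dev P b x"
proof (cases "x1 < x")
  case True
  have m: "(x - x1) mod 2^n = x - x1"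
    using assms True by (auto simp: Dn_def intro!: mod_pos_pos_trivial)
  show ?thesis using True unfolding randsplit_fails_def m dev_def Let_def
    by (auto simp: algebra_simps)
next
  case False
  hence gt: "x1 > x" using assms by auto
  have m: "(x - x1) mod 2^n = 2^n + x - x1"
  proof -
    have "(x - x1) mod 2^n = (2^n + x - x1) mod 2^n"
      by (metis add.commute add_diff_eq mod_add_self2)
    also have "\<dots> = 2^n + x - x1"
      using assms gt by (auto simp: Dn_def intro!: mod_pos_pos_trivial)
    finally show ?thesis .
  qed
  show ?thesis using False unfolding randsplit_fails_def m dev_def Let_def
    by (auto simp: algebra_simps)
qed

theorem mainTheorem8:
  fixes n :: nat and b :: int and P :: "int \<Rightarrow> int"
    and \<alpha> \<beta> :: real and x :: int
  assumes "n \<ge> 1"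
    and "\<beta> > 0" and "0 < \<alpha>" and "\<alpha> < 1"
    and "frac n (\<lambda>y. dev P b y > 0) > eps0 n P b / 2 - \<beta>"
    and "frac n (\<lambda>y. dev P b y < 0) > eps0 n P b / 2 - \<beta>"
    and "x \<in> Dn n"
    and "good n P b \<alpha> x"
  shows "fail_prob n b P x \<ge> eps0 n P b / 2 - \<beta> - (1 / \<alpha>) * (eps0 n P b / 2)^2"
proof -
  define d where "d = dev P b"
  define N :: int where "N = 2^n"
  define A where "A = {x1 \<in> Dn n. d x1 > 0}"
  define B where "B = {x1 \<in> Dn n. d x1 < 0}"
  define F where "F = {x1 \<in> Dn n. randsplit_fails n b P x x1}"
  define M where "M = {x1 \<in> Dn n. d x1 > 0 \<and> d ((x - x1) mod N) < 0}"
  define K where "K = {x1 \<in> Dn n. d x1 < 0 \<and> d ((x - x1) mod N) > 0}"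
  have fin: "finite (Dn n)" by (simp add: Dn_def)
  have cardD: "card (Dn n) = 2^n" by (simp add: Dn_def nat_power_eq)
  have ne: "Dn n \<noteq> {}" using cardD by auto
  have finF: "finite F" "finite M" "finite K" "finite A" "finite B"
    using fin by (auto simp: F_def M_def K_def A_def B_def)
  have opp: "opp_matches n P b x = card M"
    unfolding opp_matches_def delta_x_def M_def d_def N_def
    by (simp add: sum.If_cases fin Int_def)
  have fp: "fail_prob n b P x = real (card F) / 2^n"
    unfolding fail_prob_def F_def
    by (simp add: measure_pmf_of_set fin ne cardD Int_def conj_commute)
  have fA: "frac n (\<lambda>y. dev P b y > 0) = real (card A) / 2^n"
    by (simp add: frac_def A_def d_def)
  have fB: "frac n (\<lambda>y. dev P b y < 0) = real (card B) / 2^n"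
    by (simp add: frac_def B_def d_def)
  have KM: "card K \<le> card M"
  proof -
    have "inj_on (\<lambda>x1. (x - x1) mod N) K"
    proof (rule inj_onI)
      fix u v assume "u \<in> K" "v \<in> K" "(x - u) mod N = (x - v) mod N"
      hence "(x - (x - u) mod N) mod N = (x - (x - v) mod N) mod N" by simp
      hence "u mod N = v mod N" by (simp add: mod_diff_right_eq)
      thus "u = v" using \<open>u \<in> K\<close> \<open>v \<in> K\<close>
        by (auto simp: K_def Dn_def N_def)
    qed
    moreover have "(\<lambda>x1. (x - x1) mod N) ` K \<subseteq> M"
    proof
      fix y assume "y \<in> (\<lambda>x1. (x - x1) mod N) ` K"
      then obtain u where u: "u \<in> K" "y = (x - u) mod N" by auto
      have "(x - y) mod N = u mod N" using u(2) by (simp add: mod_diff_right_eq)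
      also have "\<dots> = u" using u(1) by (auto simp: K_def Dn_def N_def)
      finally have "(x - y) mod N = u" .
      moreover have "y \<in> Dn n" using u by (simp add: Dn_def N_def)
      ultimately show "y \<in> M" using u by (auto simp: M_def K_def)
    qed
    ultimately show ?thesis using finF
      by (metis card_image card_mono)
  qed
  have key: "real (card F) \<ge> real (card A) - real (card M) \<or>
             real (card F) \<ge> real (card B) - real (card M)"
  proof (cases "d x \<le> 0")
    case True
    have "A - M \<subseteq> F"
    proof
      fix y assume y: "y \<in> A - M"
      hence "y \<noteq> x" using True by (auto simp: A_def)
      thus "y \<in> F" using y True fails_iff[OF assms(7), of y b P]
        by (auto simp: A_def M_def F_def d_def N_def)
    qed
    hence "card A - card M \<le> card F"
      by (metis card_Diff_subset_Int card_mono finF diff_card_le_card_Diff order_trans)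
    thus ?thesis by linarith
  next
    case False
    have "B - K \<subseteq> F"
    proof
      fix y assume y: "y \<in> B - K"
      hence "y \<noteq> x" using False by (auto simp: B_def)
      thus "y \<in> F" using y False fails_iff[OF assms(7), of y b P]
        by (auto simp: B_def K_def F_def d_def N_def)
    qed
    hence "card B - card K \<le> card F"
      by (metis card_mono finF diff_card_le_card_Diff order_trans)
    thus ?thesis using KM by linarith
  qed
  have g: "real (card M) / 2^n \<le> (1 / \<alpha>) * (eps0 n P b / 2)^2"
    using assms(8) by (simp add: good_def opp field_simps)
  have "real (card F) / 2^n \<ge> real (card A) / 2^n - real (card M) / 2^n \<or>
        real (card F) / 2^n \<ge> real (card B) / 2^n - real (card M) / 2^n"
    using key by (auto simp: diff_divide_distrib[symmetric] divide_right_mono)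
  thus ?thesis using g assms(5,6) fA fB fp by linarith
qed

end
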